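(* For $x\in(0,1)$ let $x'=\sqrt{1-x^2}$ and $f(x)=x^2x'^2\,\mathcal{K}(x)\mathcal{K}(x')$. Then $f$ is increasing on $(0,1/\sqrt2]$ and decreasing on $[1/\sqrt2,1)$, and $$\max_{0<x<1}f(x)=f(\sqrt{1/2})=\tfrac14\big(\mathcal{K}(\sqrt{1/2})\big)^2=0.859398\ldots.$$
   Context: $\mathcal{K}(x)=\frac{\pi}{2}F(\tfrac12,\tfrac12;1;x^2)$ for $x\in(0,1)$ is the complete elliptic integral of the first kind, where $F(a,b;c;x)=\sum_{n\ge0}\frac{(a,n)(b,n)}{(c,n)n!}x^n$ and $(a,n)=a(a+1)\cdots(a+n-1)$, $(a,0)=1$. *)

theory Defs
  imports "HOL-Analysis.Analysis"
begin

definition hypergeomF :: "real \<Rightarrow> real \<Rightarrow> real \<Rightarrow> real \<Rightarrow> real" where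
  "hypergeomF a b c x =
     (\<Sum>n. pochhammer a n * pochhammer b n / (pochhammer c n * fact n) * x ^ n)"

definition ellK :: "real \<Rightarrow> real" where
  "ellK x = pi / 2 * hypergeomF (1/2) (1/2) 1 (x^2)"

definition compl :: "real \<Rightarrow> real" where
  "compl x = sqrt (1 - x^2)"

definition fK :: "real \<Rightarrow> real" where
  "fK x = x^2 * (compl x)^2 * ellK x * ellK (compl x)"

end

theory Submission
  imports Defs
begin

definition cf :: "nat \<Rightarrow> real" where
  "cf n = pochhammer (1/2) n * pochhammer (1/2) n / (pochhammer 1 n * fact n)"

definition FF :: "real \<Rightarrow> real" where
  "FF x = (\<Sum>n. cf n * x ^ n)"

lemma hyp_FF: "hypergeomF (1/2) (1/2) 1 x = FF x"
  unfolding hypergeomF_def FF_def cf_def by simp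

lemma cf_0: "cf 0 = 1" by (simp add: cf_def)

lemma cf_Suc: "cf (Suc n) = cf n * ((2 * real n + 1) / (2 * real n + 2))^2"
proof -
  have p: "pochhammer (1::real) n = fact n" by (simp add: pochhammer_fact)
  have "fact n > (0::real)" by simp
  then show ?thesis
    unfolding cf_def pochhammer_Suc p fact_Suc
    by (simp add: field_simps power2_eq_square)
qed

lemma cf_bounds: "0 \<le> cf n \<and> cf n \<le> 1"
proof (induction n)
  case 0 then show ?case by (simp add: cf_0)
next
  case (Suc n)
  have a: "0 \<le> ((2 * real n + 1) / (2 * real n + 2))^2" by simp
  have b: "((2 * real n + 1) / (2 * real n + 2))^2 \<le> 1"
    by (rule power_le_one) (auto simp: field_simps)
  show ?case using Suc a b unfolding cf_Suc
    by (simp add: mult_le_one)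
qed

lemma cf_decr: "cf (Suc n) \<le> cf n"
proof -
  have b: "((2 * real n + 1) / (2 * real n + 2))^2 \<le> 1"
    by (rule power_le_one) (auto simp: field_simps)
  show ?thesis unfolding cf_Suc using cf_bounds[of n] b
    by (simp add: mult_left_le)
qed

lemma cf_mono: "m \<le> n \<Longrightarrow> cf n \<le> cf m"
  by (induction n rule: dec_induct) (auto intro: order_trans[OF cf_decr])

lemma summable_bdd:
  fixes a :: "nat \<Rightarrow> real"
  assumes "\<And>n. \<bar>a n\<bar> \<le> B" "\<bar>x\<bar> < 1"
  shows "summable (\<lambda>n. a n * x ^ n)"
proof (rule summable_comparison_test')
  show "summable (\<lambda>n. B * \<bar>x\<bar> ^ n)"
    using assms(2) by (intro summable_mult summable_geometric) auto
  show "norm (a n * x ^ n) \<le> B * \<bar>x\<bar> ^ n" for n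
    using assms(1)[of n] by (simp add: abs_mult power_abs mult_right_mono)
qed

lemma summable_cf: "\<bar>x\<bar> < 1 \<Longrightarrow> summable (\<lambda>n. cf n * x ^ n)"
  by (rule summable_bdd[where B=1]) (use cf_bounds in auto)

lemma FF_half_bounds: "1.18034057 \<le> FF (1/2) \<and> FF (1/2) \<le> 1.1803406004"
proof -
  have sm: "summable (\<lambda>n. cf n * (1/2::real) ^ n)" by (rule summable_cf) simp
  have num: "(\<Sum>n<20. cf n * (1/2)^n) \<ge> 1.18034057 \<and> (\<Sum>n<20. cf n * (1/2)^n) + cf 20 * (1/2)^20 * 2 \<le> 1.1803406004"
    by (simp add: eval_nat_numeral cf_Suc cf_0)
  have lo: "(\<Sum>n<20. cf n * (1/2::real)^n) \<le> FF (1/2)"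
    unfolding FF_def by (rule sum_le_suminf[OF sm]) (use cf_bounds in auto)
  have split: "FF (1/2) = (\<Sum>n. cf (n + 20) * (1/2) ^ (n + 20)) + (\<Sum>n<20. cf n * (1/2::real)^n)"
    unfolding FF_def by (rule suminf_split_initial_segment[OF sm])
  have sm2: "summable (\<lambda>n. cf (n + 20) * (1/2::real) ^ (n + 20))"
    using summable_ignore_initial_segment[OF sm, of 20] by simp
  have geo: "(\<lambda>n. cf 20 * (1/2::real)^20 * (1/2)^n) sums (cf 20 * (1/2)^20 * 2)"
    using geometric_sums[of "1/2::real"] by (intro sums_mult) simp
  have "(\<Sum>n. cf (n + 20) * (1/2::real) ^ (n + 20)) \<le> cf 20 * (1/2)^20 * 2"
  proof (rule sums_le[OF _ summable_sums[OF sm2] geo])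
    fix n
    have "cf (n + 20) \<le> cf 20" by (rule cf_mono) simp
    then show "cf (n + 20) * (1/2::real) ^ (n + 20) \<le> cf 20 * (1/2)^20 * (1/2)^n"
      by (simp add: power_add mult_right_mono)
  qed
  then show ?thesis using num lo split by linarith
qed

definition D :: "real \<Rightarrow> real" where
  "D x = (\<Sum>n. diffs cf n * x ^ n)"

definition wc :: "nat \<Rightarrow> real" where
  "wc n = (if n = 0 then 0 else cf (n - 1) / (4 * real n))"

definition W :: "real \<Rightarrow> real" where
  "W x = (\<Sum>n. wc n * x ^ n)"

lemma dF: "\<bar>x\<bar> < 1 \<Longrightarrow> DERIV FF x :> D x"
  unfolding FF_def D_def
  by (rule termdiffs_strong'[where K=1]) (auto intro: summable_cf)

lemma diffs_wc: "diffs wc n = cf n / 4"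
  by (simp add: diffs_def wc_def field_simps)

lemma summable_wc: "\<bar>x\<bar> < 1 \<Longrightarrow> summable (\<lambda>n. wc n * x ^ n)"
proof (rule summable_bdd[where B=1])
  fix n show "\<bar>wc n\<bar> \<le> 1"
    using cf_bounds[of "n-1"] by (auto simp: wc_def field_simps)
qed

lemma dW: "\<bar>x\<bar> < 1 \<Longrightarrow> DERIV W x :> FF x / 4"
proof -
  assume x: "\<bar>x\<bar> < 1"
  have "DERIV W x :> (\<Sum>n. diffs wc n * x ^ n)"
    unfolding W_def
    by (rule termdiffs_strong'[where K=1]) (use x summable_wc in auto)
  also have "(\<Sum>n. diffs wc n * x ^ n) = FF x / 4"
    unfolding diffs_wc FF_def
    using suminf_divide[OF summable_cf[OF x], of 4] by simp
  finally show ?thesis .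
qed

lemma aux: "(m::real) \<ge> 0 \<Longrightarrow> (m+1)*((2*m+1)/(2*m+2))^2 - m = 1/(4*(m+1))"
proof -
  assume m: "m \<ge> 0"
  define q where "q = (2*m+1)/(2*m+2)"
  have qe: "q*(2*m+2) = 2*m+1" using m by (simp add: q_def)
  have "(m+1)*q^2 - m = ((q*(2*m+2))^2 - 4*m*(m+1))/(4*(m+1))"
    using m by (simp add: field_simps power2_eq_square)
  also have "\<dots> = 1/(4*(m+1))" unfolding qe by (simp add: power2_eq_square algebra_simps)
  finally show ?thesis by (simp add: q_def)
qed

lemma wc_Suc: "wc (Suc n) = diffs cf n - real n * cf n"
proof -
  have "wc (Suc n) = cf n / (4 * (real n + 1))" by (simp add: wc_def)
  also have "\<dots> = cf n * ((real n + 1) * ((2 * real n + 1) / (2 * real n + 2))^2 - real n)"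
    using aux[of "real n"] by simp
  also have "\<dots> = (real n + 1) * (cf n * ((2 * real n + 1) / (2 * real n + 2))^2) - real n * cf n"
    by (simp add: algebra_simps)
  also have "\<dots> = diffs cf n - real n * cf n"
    by (simp add: diffs_def cf_Suc)
  finally show ?thesis .
qed

lemma W_eq: "\<bar>x\<bar> < 1 \<Longrightarrow> W x = x * (1 - x) * D x"
proof -
  assume x: "\<bar>x\<bar> < 1"
  have s1: "(\<lambda>n. diffs cf n * x ^ n) sums D x"
    unfolding D_def
    by (rule summable_sums, rule termdiff_converges[where K=1]) (use x summable_cf in auto)
  have "(\<lambda>n. x * (diffs cf n * x ^ n)) sums (x * D x)" by (rule sums_mult[OF s1])
  then have "(\<lambda>n. (\<lambda>n. real n * cf n * x ^ n) (Suc n)) sums (x * D x)"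
    by (simp add: diffs_def algebra_simps)
  then have s2: "(\<lambda>n. real n * cf n * x ^ n) sums (x * D x)"
    by (subst (asm) sums_Suc_iff) simp
  have "(\<lambda>n. x * (diffs cf n * x ^ n) - x * (real n * cf n * x ^ n)) sums (x * D x - x * (x * D x))"
    by (intro sums_diff sums_mult s1 s2)
  then have "(\<lambda>n. (\<lambda>n. wc n * x ^ n) (Suc n)) sums (x * (1 - x) * D x)"
    by (simp add: wc_Suc algebra_simps)
  then have "(\<lambda>n. wc n * x ^ n) sums (x * (1 - x) * D x)"
    by (subst (asm) sums_Suc_iff) (simp add: wc_def)
  then show ?thesis unfolding W_def by (rule sums_unique[symmetric])
qed

lemma FF_ge1: "0 \<le> x \<Longrightarrow> x < 1 \<Longrightarrow> 1 \<le> FF x"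
proof -
  assume x: "0 \<le> x" "x < 1"
  have "(\<Sum>n<1. cf n * x ^ n) \<le> FF x"
    unfolding FF_def by (rule sum_le_suminf[OF summable_cf]) (use x cf_bounds in auto)
  then show ?thesis by (simp add: cf_0)
qed

lemma D_nonneg: "0 \<le> x \<Longrightarrow> x < 1 \<Longrightarrow> 0 \<le> D x"
  unfolding D_def
  by (rule suminf_nonneg, rule termdiff_converges[where K=1])
     (use cf_bounds in \<open>auto simp: diffs_def summable_cf\<close>)

lemma W_nonneg: "0 \<le> x \<Longrightarrow> x < 1 \<Longrightarrow> 0 \<le> W x"
  unfolding W_def
  by (rule suminf_nonneg[OF summable_wc]) (use cf_bounds in \<open>auto simp: wc_def\<close>)


definition Q :: "real \<Rightarrow> real" where
  "Q t = W t / FF t - t"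

lemma Q_decr:
  assumes "0 \<le> a" "a < b" "b < 1"
  shows "Q b < Q a"
proof (rule DERIV_neg_imp_decreasing[OF assms(2)])
  fix x assume x: "a \<le> x" "x \<le> b"
  then have x0: "0 \<le> x" "x < 1" "\<bar>x\<bar> < 1" using assms by auto
  have F1: "1 \<le> FF x" using FF_ge1 x0 by auto
  have WD: "0 \<le> W x * D x" using W_nonneg D_nonneg x0 by auto
  have "DERIV Q x :> ((FF x / 4) * FF x - W x * D x) / (FF x * FF x) - 1"
    unfolding Q_def using F1
    by (auto intro!: derivative_eq_intros dW dF x0)
  moreover have "((FF x / 4) * FF x - W x * D x) / (FF x * FF x) - 1 < 0"
  proof -
    have "((FF x / 4) * FF x - W x * D x) \<le> (FF x * FF x) / 4" using WD by simp
    also have "\<dots> < FF x * FF x" using F1 by (simp add: mult_pos_pos)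
    finally show ?thesis using F1 by (simp add: divide_less_eq)
  qed
  ultimately show "\<exists>y. DERIV Q x :> y \<and> y < 0" by blast
qed

definition g :: "real \<Rightarrow> real" where
  "g t = t * (1 - t) * FF t * FF (1 - t)"

lemma dg:
  assumes "0 < t" "t < 1"
  shows "DERIV g t :> FF t * FF (1 - t) * (Q t - Q (1 - t))"
proof -
  have t: "\<bar>t\<bar> < 1" "\<bar>1 - t\<bar> < 1" using assms by auto
  have F1: "1 \<le> FF t" "1 \<le> FF (1 - t)" using FF_ge1 assms by auto
  have d1: "DERIV (\<lambda>t. FF (1 - t)) t :> D (1 - t) * (- 1)"
    by (rule DERIV_chain2[where g="\<lambda>t. 1 - t", OF dF[OF t(2)]]) (auto intro!: derivative_eq_intros)
  have dd: "DERIV g t :> (1 - 2 * t) * FF t * FF (1 - t) + (t * (1 - t) * D t) * FF (1 - t)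
          - FF t * ((1 - t) * t * D (1 - t))"
    unfolding g_def
    by (rule derivative_eq_intros dF[OF t(1)] d1 refl | simp)+ (simp add: algebra_simps)
  moreover have "(1 - 2 * t) * FF t * FF (1 - t) + (t * (1 - t) * D t) * FF (1 - t)
          - FF t * ((1 - t) * t * D (1 - t)) = FF t * FF (1 - t) * (Q t - Q (1 - t))"
    unfolding W_eq[OF t(1)] W_eq[OF t(2)] Q_def using F1
    by (simp add: field_simps)
  ultimately show ?thesis by simp
qed

lemma g_cont: "0 < t \<Longrightarrow> t < 1 \<Longrightarrow> isCont g t"
  using dg DERIV_isCont by blast

lemma g_incr:
  assumes "0 < s" "s < u" "u \<le> 1/2"
  shows "g s < g u"
proof (rule DERIV_pos_imp_increasing_open[OF assms(2)])
  fix x assume x: "s < x" "x < u"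
  have F1: "1 \<le> FF x" "1 \<le> FF (1 - x)" using FF_ge1 x assms by auto
  have "Q (1 - x) < Q x" by (rule Q_decr) (use x assms in auto)
  then have "FF x * FF (1 - x) * (Q x - Q (1 - x)) > 0" using F1 by simp
  then show "\<exists>y. DERIV g x :> y \<and> 0 < y" using dg[of x] x assms by auto
next
  show "continuous_on {s..u} g"
    by (rule continuous_at_imp_continuous_on) (use assms g_cont in auto)
qed


lemma g_sym: "g (1 - t) = g t"
  unfolding g_def by (simp add: algebra_simps)

lemma compl_props:
  assumes "0 < x" "x < 1"
  shows "(compl x)^2 = 1 - x^2" "0 < compl x" "compl x < 1"
proof -
  have x2: "x^2 < 1" "0 < x^2" using assms by (auto simp: power_less_one_iff)
  show "(compl x)^2 = 1 - x^2" unfolding compl_def using x2 by simp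
  show "0 < compl x" unfolding compl_def using x2 by simp
  show "compl x < 1" unfolding compl_def using x2 by simp
qed

lemma fK_g:
  assumes "0 < x" "x < 1"
  shows "fK x = (pi/2)^2 * g (x^2)"
  unfolding fK_def ellK_def hyp_FF g_def compl_props(1)[OF assms]
  by (simp add: algebra_simps power2_eq_square)

lemma fK_sym:
  assumes "0 < x" "x < 1"
  shows "fK (compl x) = fK x"
  using compl_props[OF assms] fK_g[OF assms] fK_g[of "compl x"] g_sym[of "x^2"] by simp

lemma sq_le_half: "0 \<le> y \<Longrightarrow> y \<le> 1 / sqrt 2 \<Longrightarrow> y^2 \<le> 1/2"
proof -
  assume a: "0 \<le> y" "y \<le> 1 / sqrt 2"
  have "y^2 \<le> (1 / sqrt 2)^2" using a by (intro power_mono) auto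
  then show ?thesis by (simp add: power_divide)
qed

lemma half_le_sq: "1 / sqrt 2 \<le> y \<Longrightarrow> 1/2 \<le> y^2"
proof -
  assume "1 / sqrt 2 \<le> y"
  then have "(1 / sqrt 2)^2 \<le> y^2" by (intro power_mono) auto
  then show ?thesis by (simp add: power_divide)
qed

lemma invsqrt2_lt1: "1 / sqrt 2 < (1::real)"
  by (simp add: divide_less_eq)

lemma fK_incr:
  assumes "0 < x" "x < y" "y \<le> 1 / sqrt 2"
  shows "fK x < fK y"
proof -
  have y1: "y < 1" using assms invsqrt2_lt1 by linarith
  have "x^2 < y^2" using assms by (intro power_strict_mono) auto
  moreover have "y^2 \<le> 1/2" using sq_le_half assms by auto
  ultimately have "g (x^2) < g (y^2)" using assms by (intro g_incr) auto
  moreover have "0 < (pi/2)^2" by simp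
  ultimately show ?thesis using fK_g[of x] fK_g[of y] assms y1 by simp
qed

lemma fK_decr:
  assumes "1 / sqrt 2 \<le> x" "x < y" "y < 1"
  shows "fK y < fK x"
proof -
  have x0: "0 < x" using assms(1) by (smt (verit) divide_pos_pos real_sqrt_gt_zero)
  have "x^2 < y^2" using assms x0 by (intro power_strict_mono) auto
  then have "(compl y)^2 < (compl x)^2"
    using compl_props(1)[of x] compl_props(1)[of y] x0 assms by simp
  then have lt: "compl y < compl x"
    using compl_props(2)[of x] x0 assms by (simp add: power_less_imp_less_base)
  have "(compl x)^2 \<le> 1/2" using compl_props(1)[of x] x0 assms half_le_sq[of x] by simp
  then have "(compl x)^2 \<le> (1 / sqrt 2)^2" by (simp add: power_divide)
  then have le: "compl x \<le> 1 / sqrt 2"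
    by (rule power2_le_imp_le) simp
  have "fK (compl y) < fK (compl x)"
    using fK_incr[OF _ lt le] compl_props(2)[of y] assms x0 by simp
  then show ?thesis using fK_sym[of x] fK_sym[of y] x0 assms by simp
qed

lemma sqrt_half: "sqrt (1/2) = 1 / sqrt 2"
  by (simp add: real_sqrt_divide)

theorem corollary3p4:
  shows "strict_mono_on {0<..1 / sqrt 2} fK
    \<and> (\<forall>x\<in>{1 / sqrt 2..<1}. \<forall>y\<in>{1 / sqrt 2..<1}. x < y \<longrightarrow> fK y < fK x)
    \<and> (\<forall>x\<in>{0<..<1}. fK x \<le> fK (sqrt (1/2)))
    \<and> fK (sqrt (1/2)) = (1/4) * (ellK (sqrt (1/2)))^2
    \<and> 0.859398 \<le> fK (sqrt (1/2)) \<and> fK (sqrt (1/2)) < 0.859399"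
proof (intro conjI)
  show "strict_mono_on {0<..1 / sqrt 2} fK"
    unfolding strict_mono_on_def using fK_incr by auto
  show "\<forall>x\<in>{1 / sqrt 2..<1}. \<forall>y\<in>{1 / sqrt 2..<1}. x < y \<longrightarrow> fK y < fK x"
    using fK_decr by auto
  have s0: "0 < 1 / sqrt (2::real)" by simp
  show "\<forall>x\<in>{0<..<1}. fK x \<le> fK (sqrt (1/2))"
  proof
    fix x :: real assume x: "x \<in> {0<..<1}"
    show "fK x \<le> fK (sqrt (1/2))"
    proof (cases "x \<le> 1 / sqrt 2")
      case True
      then show ?thesis using fK_incr[of x "1 / sqrt 2"] x
        by (cases "x = 1 / sqrt 2") (auto simp: sqrt_half)
    next
      case False
      then show ?thesis using fK_decr[of "1 / sqrt 2" x] x by (auto simp: sqrt_half)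
    qed
  qed
  have cs: "compl (sqrt (1/2)) = sqrt (1/2)"
    unfolding compl_def by (simp add: power_divide)
  show "fK (sqrt (1/2)) = (1/4) * (ellK (sqrt (1/2)))^2"
    unfolding fK_def cs by (simp add: power2_eq_square)
  have fv: "fK (sqrt (1/2)) = pi^2 / 16 * (FF (1/2))^2"
  proof -
    have "fK (sqrt (1/2)) = (pi/2)^2 * g (1/2)"
      using fK_g[of "sqrt (1/2)"] by simp
    then show ?thesis unfolding g_def by (simp add: power2_eq_square)
  qed
  have p1: "3.141592653588 \<le> pi" "pi \<le> 3.1415926535899" by (rule pi_approx)+
  have F: "1.18034057 \<le> FF (1/2)" "FF (1/2) \<le> 1.1803406004" using FF_half_bounds by auto
  have "(3.141592653588::real)^2 * 1.18034057^2 \<le> pi^2 * (FF (1/2))^2"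
    using p1 F by (intro mult_mono power_mono) auto
  moreover have "0.859398 * 16 \<le> (3.141592653588::real)^2 * 1.18034057^2"
    by (simp add: power2_eq_square)
  ultimately show "0.859398 \<le> fK (sqrt (1/2))" unfolding fv by linarith
  have "pi^2 * (FF (1/2))^2 \<le> (3.1415926535899::real)^2 * 1.1803406004^2"
    using p1 F by (intro mult_mono power_mono) auto
  moreover have "(3.1415926535899::real)^2 * 1.1803406004^2 < 0.859399 * 16"
    by (simp add: power2_eq_square)
  ultimately show "fK (sqrt (1/2)) < 0.859399" unfolding fv by linarith
qed

end
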